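(* There is an existential formula $\phi(X,Y,Z)$ in the signature of $\mathcal{L}(I)$ such that for all finite subsets $A,B,C$ of $I$, $\mathcal{L}(I)\models\phi(A,B,C)$ if and only if $\mathrm{ips}(A,B)=C$.
   Context: Let $I$ be a dense linear order with left endpoint $0$ and no right endpoint. Let $\mathcal{P}_{\mathrm{fci}}(I)$ be the set of finite unions of closed intervals $[i,j]$, $[i,+\infty)$, $(-\infty,j]$ of $I$. $\mathcal{L}(I)$ is the structure with universe $\mathcal{P}_{\mathrm{fci}}(I)$ in the signature $\{\cup,\cap,\bot,c_0,\min,\max,l,r\}$, interpreted as follows. - $\cup$ and $\cap$ are union and intersection. - $\bot$ is $\emptyset$, and $c_0$ is $\{0\}$. - $\min(A)$ is the singleton of the least element of $A$, with $\min(\emptyset)=\emptyset$. - $\max(A)$ is the singleton of the greatest element when $A$ is nonempty and bounded, and $\emptyset$ otherwise. - $l(A)$ and $r(A)$ are the sets of left and right endpoints of $A$. Left endpoints are the minima of the maximal closed intervals composing $A$. Right endpoints are the maxima of the bounded ones. For finite $A,B$, $\mathrm{ips}(A,B)=\{i\in A: s_A(i)\in B\}$, where $s_A$ is the successor function of $A$ with the induced order. *)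

theory Defs
  imports Main
begin

text \<open>The dense linear order I with left endpoint 0 and no right endpoint is modelled
as a type of class dense_linorder, no_top, order_bot; the left endpoint 0 is bot.\<close>

definition closed_intervals :: "('a::linorder) set set" where
  "closed_intervals = {{i..j} | i j. True} \<union> {{i..} | i. True} \<union> {{..j} | j. True}"

definition Pfci :: "('a::linorder) set set" where
  "Pfci = {\<Union>F | F. finite F \<and> F \<subseteq> closed_intervals}"

definition convex_set :: "('a::linorder) set \<Rightarrow> bool" where
  "convex_set S \<longleftrightarrow> (\<forall>x y z. x \<in> S \<longrightarrow> z \<in> S \<longrightarrow> x \<le> y \<longrightarrow> y \<le> z \<longrightarrow> y \<in> S)"

definition max_convex_part :: "('a::linorder) set \<Rightarrow> 'a set \<Rightarrow> bool" where
  "max_convex_part C A \<longleftrightarrow> C \<subseteq> A \<and> convex_set C \<and>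
     (\<forall>D. C \<subseteq> D \<and> D \<subseteq> A \<and> convex_set D \<longrightarrow> D = C)"

definition min_op :: "('a::linorder) set \<Rightarrow> 'a set" where
  "min_op A = {x \<in> A. \<forall>y\<in>A. x \<le> y}"

definition max_op :: "('a::linorder) set \<Rightarrow> 'a set" where
  "max_op A = {x \<in> A. \<forall>y\<in>A. y \<le> x}"

definition l_op :: "('a::linorder) set \<Rightarrow> 'a set" where
  "l_op A = {x. \<exists>C. max_convex_part C A \<and> x \<in> C \<and> (\<forall>y\<in>C. x \<le> y)}"

definition r_op :: "('a::linorder) set \<Rightarrow> 'a set" where
  "r_op A = {x. \<exists>C. max_convex_part C A \<and> x \<in> C \<and> (\<forall>y\<in>C. y \<le> x)}"

datatype tm = Var nat | TUn tm tm | TInter tm tm | Bot | C0 | Mn tm | Mx tm | Lt tm | Rt tm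

datatype fm = TEq tm tm | Neg fm | Conj fm fm | Disj fm fm | TEx nat fm

fun eval_tm :: "(nat \<Rightarrow> ('a::{linorder,order_bot}) set) \<Rightarrow> tm \<Rightarrow> 'a set" where
  "eval_tm v (Var n) = v n"
| "eval_tm v (TUn s t) = eval_tm v s \<union> eval_tm v t"
| "eval_tm v (TInter s t) = eval_tm v s \<inter> eval_tm v t"
| "eval_tm v Bot = {}"
| "eval_tm v C0 = {bot}"
| "eval_tm v (Mn t) = min_op (eval_tm v t)"
| "eval_tm v (Mx t) = max_op (eval_tm v t)"
| "eval_tm v (Lt t) = l_op (eval_tm v t)"
| "eval_tm v (Rt t) = r_op (eval_tm v t)"

text \<open>Satisfaction in L(I): quantifiers range over the universe Pfci.\<close>
fun sat :: "(nat \<Rightarrow> ('a::{linorder,order_bot}) set) \<Rightarrow> fm \<Rightarrow> bool" where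
  "sat v (TEq s t) \<longleftrightarrow> eval_tm v s = eval_tm v t"
| "sat v (Neg f) \<longleftrightarrow> \<not> sat v f"
| "sat v (Conj f g) \<longleftrightarrow> sat v f \<and> sat v g"
| "sat v (Disj f g) \<longleftrightarrow> sat v f \<or> sat v g"
| "sat v (TEx x f) \<longleftrightarrow> (\<exists>S \<in> Pfci. sat (v(x := S)) f)"

fun fv_tm :: "tm \<Rightarrow> nat set" where
  "fv_tm (Var n) = {n}"
| "fv_tm (TUn s t) = fv_tm s \<union> fv_tm t"
| "fv_tm (TInter s t) = fv_tm s \<union> fv_tm t"
| "fv_tm Bot = {}"
| "fv_tm C0 = {}"
| "fv_tm (Mn t) = fv_tm t"
| "fv_tm (Mx t) = fv_tm t"
| "fv_tm (Lt t) = fv_tm t"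
| "fv_tm (Rt t) = fv_tm t"

fun fv :: "fm \<Rightarrow> nat set" where
  "fv (TEq s t) = fv_tm s \<union> fv_tm t"
| "fv (Neg f) = fv f"
| "fv (Conj f g) = fv f \<union> fv g"
| "fv (Disj f g) = fv f \<union> fv g"
| "fv (TEx x f) = fv f - {x}"

fun qfree :: "fm \<Rightarrow> bool" where
  "qfree (TEq s t) = True"
| "qfree (Neg f) = qfree f"
| "qfree (Conj f g) = (qfree f \<and> qfree g)"
| "qfree (Disj f g) = (qfree f \<and> qfree g)"
| "qfree (TEx x f) = False"

fun existential :: "fm \<Rightarrow> bool" where
  "existential (TEx x f) = existential f"
| "existential f = qfree f"

definition ips :: "('a::linorder) set \<Rightarrow> 'a set \<Rightarrow> 'a set" where
  "ips A B = {i \<in> A. \<exists>j \<in> A. i < j \<and> (\<forall>k \<in> A. i < k \<longrightarrow> j \<le> k) \<and> j \<in> B}"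

end

theory Submission
  imports Defs
begin


lemma convex_Un: "convex_set T1 \<Longrightarrow> convex_set T2 \<Longrightarrow> x \<in> T1 \<Longrightarrow> x \<in> T2 \<Longrightarrow> convex_set (T1 \<union> T2)"
  unfolding convex_set_def by (metis Un_iff linorder_le_cases)

lemma convex_ivl: "convex_set {a..(b::'a::linorder)}"
  unfolding convex_set_def by auto

definition cmpnt :: "('a::linorder) set \<Rightarrow> 'a \<Rightarrow> 'a set" where
  "cmpnt S p = \<Union>{T. T \<subseteq> S \<and> convex_set T \<and> p \<in> T}"

lemma comp_max: assumes "p \<in> S" shows "max_convex_part (cmpnt S p) S" "p \<in> cmpnt S p"
proof -
  have sing: "convex_set {p}" unfolding convex_set_def by auto
  show "p \<in> cmpnt S p" unfolding cmpnt_def using assms sing by (intro UnionI[of "{p}"]) auto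
  have cv: "convex_set (cmpnt S p)"
    unfolding convex_set_def
  proof (intro allI impI)
    fix x y z assume "x \<in> cmpnt S p" "z \<in> cmpnt S p" "x \<le> y" "y \<le> z"
    then obtain T1 T2 where T: "T1 \<subseteq> S" "convex_set T1" "p \<in> T1" "x \<in> T1"
      "T2 \<subseteq> S" "convex_set T2" "p \<in> T2" "z \<in> T2" unfolding cmpnt_def by blast
    have "convex_set (T1 \<union> T2)" using convex_Un T by metis
    then have "y \<in> T1 \<union> T2" using \<open>x \<le> y\<close> \<open>y \<le> z\<close> T unfolding convex_set_def by blast
    then show "y \<in> cmpnt S p" unfolding cmpnt_def using T by blast
  qed
  show "max_convex_part (cmpnt S p) S"
    unfolding max_convex_part_def
  proof (intro conjI allI impI)
    show "cmpnt S p \<subseteq> S" unfolding cmpnt_def by blast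
    show "convex_set (cmpnt S p)" by (rule cv)
    fix D assume "cmpnt S p \<subseteq> D \<and> D \<subseteq> S \<and> convex_set D"
    moreover have "p \<in> D" using calculation \<open>p \<in> cmpnt S p\<close> by blast
    ultimately show "D = cmpnt S p" unfolding cmpnt_def by blast
  qed
qed

lemma l_char: "l_op S = {p \<in> S. \<not> (\<exists>y<p. {y..p} \<subseteq> S)}"
proof (intro set_eqI iffI)
  fix p assume "p \<in> l_op S"
  then obtain C where C: "max_convex_part C S" "p \<in> C" "\<forall>y\<in>C. p \<le> y" unfolding l_op_def by blast
  have "p \<in> S" using C unfolding max_convex_part_def by blast
  moreover have "\<not> (\<exists>y<p. {y..p} \<subseteq> S)"
  proof
    assume "\<exists>y<p. {y..p} \<subseteq> S"
    then obtain y where y: "y < p" "{y..p} \<subseteq> S" by blast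
    have "convex_set (C \<union> {y..p})" using convex_Un[OF _ convex_ivl, of C p y p] C y
      unfolding max_convex_part_def by auto
    then have "C \<union> {y..p} = C" using C y unfolding max_convex_part_def by blast
    then have "y \<in> C" using y by auto
    then show False using C y by auto
  qed
  ultimately show "p \<in> {p \<in> S. \<not> (\<exists>y<p. {y..p} \<subseteq> S)}" by blast
next
  fix p assume p: "p \<in> {p \<in> S. \<not> (\<exists>y<p. {y..p} \<subseteq> S)}"
  have M: "max_convex_part (cmpnt S p) S" "p \<in> cmpnt S p" using comp_max p by auto
  have "\<forall>y\<in>cmpnt S p. p \<le> y"
  proof
    fix y assume y: "y \<in> cmpnt S p"
    show "p \<le> y"
    proof (rule ccontr)
      assume "\<not> p \<le> y"
      then have "y < p" by simp
      moreover have "{y..p} \<subseteq> S"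
      proof
        fix w assume w: "w \<in> {y..p}"
        have cv: "convex_set (cmpnt S p)" "cmpnt S p \<subseteq> S" using M(1) unfolding max_convex_part_def by auto
        have "w \<in> cmpnt S p" using cv(1)[unfolded convex_set_def, rule_format, of y p w] y M(2) w by auto
        then show "w \<in> S" using cv(2) by blast
      qed
      ultimately show False using p by blast
    qed
  qed
  then show "p \<in> l_op S" unfolding l_op_def using M by blast
qed

lemma r_char: "r_op S = {p \<in> S. \<not> (\<exists>y>p. {p..y} \<subseteq> S)}"
proof (intro set_eqI iffI)
  fix p assume "p \<in> r_op S"
  then obtain C where C: "max_convex_part C S" "p \<in> C" "\<forall>y\<in>C. y \<le> p" unfolding r_op_def by blast
  have "p \<in> S" using C unfolding max_convex_part_def by blast
  moreover have "\<not> (\<exists>y>p. {p..y} \<subseteq> S)"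
  proof
    assume "\<exists>y>p. {p..y} \<subseteq> S"
    then obtain y where y: "y > p" "{p..y} \<subseteq> S" by blast
    have "convex_set (C \<union> {p..y})" using convex_Un[OF _ convex_ivl, of C p p y] C y
      unfolding max_convex_part_def by auto
    then have "C \<union> {p..y} = C" using C y unfolding max_convex_part_def by blast
    then have "y \<in> C" using y by auto
    then show False using C y by auto
  qed
  ultimately show "p \<in> {p \<in> S. \<not> (\<exists>y>p. {p..y} \<subseteq> S)}" by blast
next
  fix p assume p: "p \<in> {p \<in> S. \<not> (\<exists>y>p. {p..y} \<subseteq> S)}"
  have M: "max_convex_part (cmpnt S p) S" "p \<in> cmpnt S p" using comp_max p by auto
  have "\<forall>y\<in>cmpnt S p. y \<le> p"
  proof
    fix y assume y: "y \<in> cmpnt S p"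
    show "y \<le> p"
    proof (rule ccontr)
      assume "\<not> y \<le> p"
      then have "y > p" by simp
      moreover have "{p..y} \<subseteq> S"
      proof
        fix w assume w: "w \<in> {p..y}"
        have cv: "convex_set (cmpnt S p)" "cmpnt S p \<subseteq> S" using M(1) unfolding max_convex_part_def by auto
        have "w \<in> cmpnt S p" using cv(1)[unfolded convex_set_def, rule_format, of p y w] y M(2) w by auto
        then show "w \<in> S" using cv(2) by blast
      qed
      ultimately show False using p by blast
    qed
  qed
  then show "p \<in> r_op S" unfolding r_op_def using M by blast
qed

lemma ivl_min: assumes "J \<in> closed_intervals" "z \<in> (J::'a::{linorder,order_bot} set)"
  shows "\<exists>p\<in>J. (\<forall>y\<in>J. p \<le> y) \<and> {p..z} \<subseteq> J"
proof -
  consider i j where "J = {i..j}" | i where "J = {i..}" | j where "J = {..j}"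
    using assms(1) unfolding closed_intervals_def by blast
  then show ?thesis
  proof cases
    case 1 then show ?thesis using assms(2) by (intro bexI[of _ i]) auto
  next
    case 2 then show ?thesis using assms(2) by (intro bexI[of _ i]) auto
  next
    case 3 then show ?thesis using assms(2) by (intro bexI[of _ bot]) auto
  qed
qed

lemma ivl_max: assumes "J \<in> closed_intervals" "z \<in> (J::'a::{linorder,no_top} set)" "\<forall>y\<in>J. y \<le> b"
  shows "\<exists>q\<in>J. (\<forall>y\<in>J. y \<le> q) \<and> {z..q} \<subseteq> J"
proof -
  consider i j where "J = {i..j}" | i where "J = {i..}" | j where "J = {..j}"
    using assms(1) unfolding closed_intervals_def by blast
  then show ?thesis
  proof cases
    case 1 then show ?thesis using assms(2) by (intro bexI[of _ j]) auto
  next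
    case 2
    obtain c where "c > max i b" using gt_ex by blast
    then have "c \<in> J" "\<not> c \<le> b" using 2 by auto
    then show ?thesis using assms(3) by blast
  next
    case 3 then show ?thesis using assms(2) by (intro bexI[of _ j]) auto
  qed
qed



lemma subsing_finite: assumes "\<forall>a\<in>T. \<forall>b\<in>T. a = b" shows "finite T"
proof (cases "T = {}")
  case False
  then obtain a where "a \<in> T" by blast
  then have "T \<subseteq> {a}" using assms by blast
  then show ?thesis using finite_subset by blast
qed simp

lemma K_l:
  assumes S: "S \<in> Pfci" and x: "x \<in> (S::'a::{dense_linorder,order_bot} set)"
  shows "\<exists>p\<le>x. {p..x} \<subseteq> S \<and> p \<in> l_op S"
proof -
  obtain F where F: "S = \<Union>F" "finite F" "F \<subseteq> closed_intervals" using S unfolding Pfci_def by blast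
  define L where "L = (\<Union>J\<in>F. {p\<in>J. \<forall>y\<in>J. p \<le> y})"
  have fL: "finite L" unfolding L_def using F(2)
    by (intro finite_UN_I) (auto intro!: subsing_finite antisym)
  define P where "P = L \<inter> {p. p \<le> x \<and> {p..x} \<subseteq> S}"
  have gen: "\<exists>q\<in>L. q \<le> z \<and> {q..z} \<subseteq> S" if zS: "z \<in> S" for z
  proof -
    obtain J where J: "J \<in> F" "z \<in> J" using F zS by blast
    obtain q where "q \<in> J" "\<forall>y\<in>J. q \<le> y" "{q..z} \<subseteq> J" using ivl_min[of J z] J F by blast
    then show ?thesis unfolding L_def using J F by (intro bexI[of _ q]) auto
  qed
  have "P \<noteq> {}" using gen[OF x] unfolding P_def by blast
  moreover have fP: "finite P" using fL unfolding P_def by blast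
  ultimately have mP: "Min P \<in> P" by simp
  define m where "m = Min P"
  have m: "m \<le> x" "{m..x} \<subseteq> S" using mP unfolding m_def P_def by auto
  have "m \<in> l_op S" unfolding l_char
  proof (intro CollectI conjI notI)
    show "m \<in> S" using m by auto
    assume "\<exists>y<m. {y..m} \<subseteq> S"
    then obtain y where y: "y < m" "{y..m} \<subseteq> S" by blast
    obtain z where z: "y < z" "z < m" using dense[OF y(1)] by blast
    then have "z \<in> S" using y by (meson atLeastAtMost_iff less_imp_le subsetD)
    then obtain q where q: "q \<in> L" "q \<le> z" "{q..z} \<subseteq> S" using gen by blast
    have "{q..x} \<subseteq> S"
    proof
      fix w assume w: "w \<in> {q..x}"
      show "w \<in> S"
      proof (cases "w \<le> z")
        case True then show ?thesis using q w by auto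
      next
        case False
        show ?thesis
        proof (cases "w \<le> m")
          case True then show ?thesis using y z False by auto
        next
          case False then show ?thesis using m w by auto
        qed
      qed
    qed
    then have "q \<in> P" unfolding P_def using q z m by auto
    then have "m \<le> q" unfolding m_def using fP by simp
    then show False using q z by simp
  qed
  then show ?thesis using m by blast
qed

lemma K_r:
  assumes S: "S \<in> Pfci" and x: "x \<in> (S::'a::{dense_linorder,no_top} set)"
    and b: "\<forall>y\<in>S. y \<le> b"
  shows "\<exists>q\<ge>x. {x..q} \<subseteq> S \<and> q \<in> r_op S"
proof -
  obtain F where F: "S = \<Union>F" "finite F" "F \<subseteq> closed_intervals" using S unfolding Pfci_def by blast
  define L where "L = (\<Union>J\<in>F. {p\<in>J. \<forall>y\<in>J. y \<le> p})"
  have fL: "finite L" unfolding L_def using F(2)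
    by (intro finite_UN_I) (auto intro!: subsing_finite antisym)
  define P where "P = L \<inter> {p. x \<le> p \<and> {x..p} \<subseteq> S}"
  have gen: "\<exists>q\<in>L. z \<le> q \<and> {z..q} \<subseteq> S" if zS: "z \<in> S" for z
  proof -
    obtain J where J: "J \<in> F" "z \<in> J" using F zS by blast
    have "\<forall>y\<in>J. y \<le> b" using b J F by blast
    then obtain q where "q \<in> J" "\<forall>y\<in>J. y \<le> q" "{z..q} \<subseteq> J" using ivl_max[of J z b] J F by blast
    then show ?thesis unfolding L_def using J F by (intro bexI[of _ q]) auto
  qed
  have "P \<noteq> {}" using gen[OF x] unfolding P_def by blast
  moreover have fP: "finite P" using fL unfolding P_def by blast
  ultimately have mP: "Max P \<in> P" by simp
  define m where "m = Max P"
  have m: "x \<le> m" "{x..m} \<subseteq> S" using mP unfolding m_def P_def by auto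
  have "m \<in> r_op S" unfolding r_char
  proof (intro CollectI conjI notI)
    show "m \<in> S" using m by auto
    assume "\<exists>y>m. {m..y} \<subseteq> S"
    then obtain y where y: "y > m" "{m..y} \<subseteq> S" by blast
    obtain z where z: "m < z" "z < y" using dense[OF y(1)] by blast
    then have "z \<in> S" using y by (meson atLeastAtMost_iff less_imp_le subsetD)
    then obtain q where q: "q \<in> L" "z \<le> q" "{z..q} \<subseteq> S" using gen by blast
    have "{x..q} \<subseteq> S"
    proof
      fix w assume w: "w \<in> {x..q}"
      show "w \<in> S"
      proof (cases "z \<le> w")
        case True then show ?thesis using q w by auto
      next
        case False
        show ?thesis
        proof (cases "m \<le> w")
          case True then show ?thesis using y z False by auto
        next
          case False then show ?thesis using m w by auto
        qed
      qed
    qed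
    then have "q \<in> P" unfolding P_def using q z m by auto
    then have "q \<le> m" unfolding m_def using fP by simp
    then show False using q z by simp
  qed
  then show ?thesis using m by blast
qed



definition cnd :: "('a::linorder) set \<Rightarrow> 'a set \<Rightarrow> 'a set \<Rightarrow> 'a set \<Rightarrow> bool" where
  "cnd A B S S1 \<longleftrightarrow> l_op S \<union> r_op S \<subseteq> A \<and> S \<inter> A \<subseteq> l_op S \<union> r_op S \<and>
     l_op S \<inter> r_op S = {} \<and> S1 \<subseteq> S \<and> l_op S1 \<subseteq> l_op S \<and> r_op S1 = r_op S \<inter> B"

lemma ivl_sub: "{a..b} \<subseteq> S \<Longrightarrow> a \<le> c \<Longrightarrow> d \<le> (b::'a::linorder) \<Longrightarrow> {c..d} \<subseteq> S"
  by (meson atLeastAtMost_iff order_trans subset_eq)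

lemma ivl_mem: "{a..b} \<subseteq> S \<Longrightarrow> a \<le> c \<Longrightarrow> c \<le> (b::'a::linorder) \<Longrightarrow> c \<in> S"
  by auto

lemma claim1:
  fixes S :: "'a::{dense_linorder,no_top,order_bot} set"
  assumes S: "S \<in> Pfci" and c: "cnd A B S S1" and b: "\<forall>y\<in>S. y \<le> b" and p: "p \<in> l_op S"
  shows "\<exists>q. p < q \<and> {p..q} \<subseteq> S \<and> q \<in> r_op S \<and> q \<in> A \<and> (\<forall>a\<in>A. p < a \<longrightarrow> q \<le> a)"
proof -
  have pS: "p \<in> S" using p unfolding l_char by blast
  obtain q where q: "p \<le> q" "{p..q} \<subseteq> S" "q \<in> r_op S" using K_r[OF S pS b] by blast
  have "p \<noteq> q" using c p q(3) unfolding cnd_def by blast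
  then have pq: "p < q" using q by simp
  have qA: "q \<in> A" using c q(3) unfolding cnd_def by blast
  have "q \<le> a" if a: "a \<in> A" "p < a" for a
  proof (rule ccontr)
    assume "\<not> q \<le> a"
    then have aq: "a < q" by simp
    then have "a \<in> S" using ivl_mem[OF q(2), of a] a by simp
    then have "a \<in> l_op S \<or> a \<in> r_op S" using c a unfolding cnd_def by blast
    then show False
    proof
      assume "a \<in> l_op S"
      moreover have "{p..a} \<subseteq> S" using ivl_sub[OF q(2), of p a] aq by simp
      ultimately show False using a(2) unfolding l_char by blast
    next
      assume "a \<in> r_op S"
      moreover have "{a..q} \<subseteq> S" using ivl_sub[OF q(2), of a q] a(2) by simp
      ultimately show False using aq unfolding r_char by blast
    qed
  qed
  then show ?thesis using pq q qA by blast
qed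

lemma claim2:
  fixes S :: "'a::{dense_linorder,no_top,order_bot} set"
  assumes S: "S \<in> Pfci" and S1: "S1 \<in> Pfci" and c: "cnd A B S S1" and b: "\<forall>y\<in>S. y \<le> b"
    and z: "z \<in> l_op S1"
  shows "z \<in> ips A B"
proof -
  have zS: "z \<in> l_op S" using z c unfolding cnd_def by blast
  have z1: "z \<in> S1" using z unfolding l_char by blast
  have b1: "\<forall>y\<in>S1. y \<le> b" using b c unfolding cnd_def by blast
  obtain q where q: "z \<le> q" "{z..q} \<subseteq> S1" "q \<in> r_op S1" using K_r[OF S1 z1 b1] by blast
  have qr: "q \<in> r_op S" "q \<in> B" using q(3) c unfolding cnd_def by blast+
  have "z \<noteq> q" using c zS qr unfolding cnd_def by blast
  then have zq: "z < q" using q by simp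
  have zqS: "{z..q} \<subseteq> S" using q(2) c unfolding cnd_def by blast
  obtain q' where q': "z < q'" "{z..q'} \<subseteq> S" "q' \<in> r_op S" "q' \<in> A" "\<forall>a\<in>A. z < a \<longrightarrow> q' \<le> a"
    using claim1[OF S c b zS] by blast
  have "q = q'"
  proof (rule ccontr)
    assume "q \<noteq> q'"
    then have "q < q' \<or> q' < q" by auto
    then show False
    proof
      assume "q < q'"
      moreover have "{q..q'} \<subseteq> S" using ivl_sub[OF q'(2), of q q'] zq by simp
      ultimately show False using qr(1) unfolding r_char by blast
    next
      assume "q' < q"
      moreover have "{q'..q} \<subseteq> S" using ivl_sub[OF zqS, of q' q] q'(1) by simp
      ultimately show False using q'(3) unfolding r_char by blast
    qed
  qed
  moreover have "z \<in> A" using zS c unfolding cnd_def by blast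
  ultimately show ?thesis unfolding ips_def using q' qr by blast
qed

lemma claim3:
  fixes S :: "'a::{dense_linorder,no_top,order_bot} set"
  assumes S: "S \<in> Pfci" and S1: "S1 \<in> Pfci" and c: "cnd A B S S1" and b: "\<forall>y\<in>S. y \<le> b"
    and i: "i \<in> l_op S" and ii: "i \<in> ips A B"
  shows "i \<in> l_op S1"
proof -
  obtain j where j: "j \<in> A" "i < j" "\<forall>k\<in>A. i < k \<longrightarrow> j \<le> k" "j \<in> B"
    using ii unfolding ips_def by blast
  obtain q where q: "i < q" "{i..q} \<subseteq> S" "q \<in> r_op S" "q \<in> A" "\<forall>a\<in>A. i < a \<longrightarrow> q \<le> a"
    using claim1[OF S c b i] by blast
  have "q = j" using q j by (meson antisym)
  then have "q \<in> r_op S1" using c q j unfolding cnd_def by blast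
  then have q1: "q \<in> S1" unfolding r_char by blast
  obtain p where p: "p \<le> q" "{p..q} \<subseteq> S1" "p \<in> l_op S1" using K_l[OF S1 q1] by blast
  have pl: "p \<in> l_op S" using p c unfolding cnd_def by blast
  have "p \<noteq> q" using c pl q unfolding cnd_def by blast
  then have pq: "p < q" using p by simp
  have pqS: "{p..q} \<subseteq> S" using p(2) c unfolding cnd_def by blast
  have "p = i"
  proof (rule ccontr)
    assume "p \<noteq> i"
    then have "p < i \<or> i < p" by auto
    then show False
    proof
      assume "p < i"
      moreover have "{p..i} \<subseteq> S" using ivl_sub[OF pqS, of p i] q(1) by simp
      ultimately show False using i unfolding l_char by blast
    next
      assume "i < p"
      moreover have "{i..p} \<subseteq> S" using ivl_sub[OF q(2), of i p] pq by simp
      ultimately show False using pl unfolding l_char by blast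
    qed
  qed
  then show ?thesis using p by blast
qed

lemma fwd:
  fixes A :: "'a::{dense_linorder,no_top,order_bot} set"
  assumes fA: "finite A" and P: "D \<in> Pfci" "E \<in> Pfci" "D1 \<in> Pfci" "E1 \<in> Pfci"
    and cD: "cnd A B D D1" and cE: "cnd A B E E1"
    and g1: "A \<subseteq> l_op D \<union> l_op E \<union> max_op A"
    and g2: "max_op (D \<union> E \<union> A) = max_op A"
    and g3: "C = l_op D1 \<union> l_op E1"
  shows "ips A B = C"
proof (cases "A = {}")
  case True
  then have "C = {}" using g3 cD cE unfolding cnd_def by blast
  moreover have "ips A B = {}" using True unfolding ips_def by blast
  ultimately show ?thesis by simp
next
  case False
  have "Max A \<in> max_op A" using fA False unfolding max_op_def by auto
  then have "Max A \<in> max_op (D \<union> E \<union> A)" using g2 by simp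
  then have bD: "\<forall>y\<in>D. y \<le> Max A" and bE: "\<forall>y\<in>E. y \<le> Max A" unfolding max_op_def by auto
  show ?thesis
  proof (intro set_eqI iffI)
    fix i assume ii: "i \<in> ips A B"
    then obtain j where "i \<in> A" "j \<in> A" "i < j" unfolding ips_def by blast
    then have "i \<notin> max_op A" unfolding max_op_def using leD by blast
    then have "i \<in> l_op D \<or> i \<in> l_op E" using g1 \<open>i \<in> A\<close> by blast
    then show "i \<in> C"
      using claim3[OF P(1,3) cD bD _ ii] claim3[OF P(2,4) cE bE _ ii] g3 by blast
  next
    fix z assume "z \<in> C"
    then show "z \<in> ips A B" using claim2[OF P(1,3) cD bD] claim2[OF P(2,4) cE bE] g3 by blast
  qed
qed



definition Wk :: "('a::linorder) list \<Rightarrow> nat set \<Rightarrow> 'a set" where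
  "Wk xs K = (\<Union>k\<in>K. {xs!k..xs!Suc k})"

lemma nth_lt: fixes xs :: "'a::linorder list" assumes s: "sorted_wrt (<) xs" and i: "i < length xs" and j: "j < length xs"
  shows "(xs!i < xs!j) = (i < j)"
proof (cases "i < j")
  case True then show ?thesis using sorted_wrt_nth_less[OF s True j] by simp
next
  case False
  then have "j < i \<or> j = i" by auto
  then show ?thesis
  proof
    assume "j < i" then have "xs!j < xs!i" using sorted_wrt_nth_less[OF s _ i] by blast
    then show ?thesis using False by (meson less_asym)
  qed (use False in simp)
qed

lemma nth_le: fixes xs :: "'a::linorder list" assumes "sorted_wrt (<) xs" "i < length xs" "j < length xs" shows "(xs!i \<le> xs!j) = (i \<le> j)"
proof -
  have "(xs!j < xs!i) = (j < i)" using nth_lt[OF assms(1) assms(3) assms(2)] .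
  then show ?thesis by (metis linorder_not_less)
qed

lemma W_pfci: "finite K \<Longrightarrow> Wk xs K \<in> Pfci"
proof -
  assume fK: "finite K"
  have "(\<lambda>k. {xs!k..xs!Suc k}) ` K \<subseteq> closed_intervals"
    unfolding closed_intervals_def by blast
  moreover have "Wk xs K = \<Union>((\<lambda>k. {xs!k..xs!Suc k}) ` K)" unfolding Wk_def by simp
  ultimately show ?thesis unfolding Pfci_def using fK
    by (intro CollectI exI[of _ "(\<lambda>k. {xs!k..xs!Suc k}) ` K"] conjI) simp_all
qed

locale wsetup =
  fixes xs :: "'a::dense_linorder list" and K :: "nat set"
  assumes srt: "sorted_wrt (<) xs" and Kb: "\<And>k. k \<in> K \<Longrightarrow> Suc k < length xs"
    and Kc: "\<And>k. k \<in> K \<Longrightarrow> Suc k \<notin> K"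
begin

lemma W_l: "l_op (Wk xs K) = (\<lambda>k. xs!k) ` K"
proof (intro set_eqI iffI)
  fix p assume "p \<in> l_op (Wk xs K)"
  then have p: "p \<in> Wk xs K" "\<not> (\<exists>y<p. {y..p} \<subseteq> Wk xs K)" unfolding l_char by auto
  then obtain m where m: "m \<in> K" "xs!m \<le> p" "p \<le> xs!Suc m" unfolding Wk_def by auto
  have "\<not> xs!m < p"
  proof
    assume "xs!m < p"
    moreover have "{xs!m..p} \<subseteq> Wk xs K"
    proof -
      have "{xs!m..p} \<subseteq> {xs!m..xs!Suc m}" using m by auto
      also have "\<dots> \<subseteq> Wk xs K" unfolding Wk_def by (rule UN_upper[OF m(1)])
      finally show ?thesis .
    qed
    ultimately show False using p(2) by blast
  qed
  then show "p \<in> (\<lambda>k. xs!k) ` K" using m by (intro image_eqI[of _ _ m]) auto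
next
  fix p assume "p \<in> (\<lambda>k. xs!k) ` K"
  then obtain k where k: "k \<in> K" "p = xs!k" by blast
  have kn: "Suc k < length xs" using Kb k by blast
  have pl: "p < xs!Suc k" using nth_lt[OF srt, of k "Suc k"] kn k by simp
  show "p \<in> l_op (Wk xs K)" unfolding l_char
  proof (intro CollectI conjI notI)
    show "p \<in> Wk xs K" unfolding Wk_def using k pl by auto
    assume "\<exists>y<p. {y..p} \<subseteq> Wk xs K"
    then obtain y where y: "y < p" "{y..p} \<subseteq> Wk xs K" by blast
    define y' where "y' = (if k = 0 then y else max y (xs!(k-1)))"
    have "y' < p"
    proof (cases "k = 0")
      case False
      then have "xs!(k-1) < xs!k" using nth_lt[OF srt, of "k-1" k] kn by simp
      then show ?thesis using y k False unfolding y'_def by simp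
    qed (simp add: y'_def y)
    then obtain z where z: "y' < z" "z < p" using dense by blast
    have "y \<le> y'" unfolding y'_def by simp
    then have "y < z" using z(1) by (rule order.strict_trans1)
    then have "z \<in> {y..p}" using z by (simp add: less_imp_le)
    then have "z \<in> Wk xs K" using y(2) by blast
    then obtain m where m: "m \<in> K" "xs!m \<le> z" "z \<le> xs!Suc m" unfolding Wk_def by auto
    have mn: "Suc m < length xs" using Kb m by blast
    have "xs!m < xs!k" using m z k by simp
    then have mk: "m < k" using nth_lt[OF srt, of m k] mn kn by simp
    show False
    proof (cases "Suc m = k")
      case True then show ?thesis using Kc m k by blast
    next
      case False
      then have "Suc m \<le> k - 1" using mk by simp
      then have "xs!Suc m \<le> xs!(k-1)" using nth_le[OF srt, of "Suc m" "k-1"] kn by simp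
      moreover have "xs!(k-1) \<le> y'" using mk unfolding y'_def by simp
      ultimately show False using m z by simp
    qed
  qed
qed

lemma W_r: "r_op (Wk xs K) = (\<lambda>k. xs!Suc k) ` K"
proof (intro set_eqI iffI)
  fix p assume "p \<in> r_op (Wk xs K)"
  then have p: "p \<in> Wk xs K" "\<not> (\<exists>y>p. {p..y} \<subseteq> Wk xs K)" unfolding r_char by auto
  then obtain m where m: "m \<in> K" "xs!m \<le> p" "p \<le> xs!Suc m" unfolding Wk_def by auto
  have "\<not> p < xs!Suc m"
  proof
    assume "p < xs!Suc m"
    moreover have "{p..xs!Suc m} \<subseteq> Wk xs K"
    proof -
      have "{p..xs!Suc m} \<subseteq> {xs!m..xs!Suc m}" using m by auto
      also have "\<dots> \<subseteq> Wk xs K" unfolding Wk_def by (rule UN_upper[OF m(1)])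
      finally show ?thesis .
    qed
    ultimately show False using p(2) by blast
  qed
  then show "p \<in> (\<lambda>k. xs!Suc k) ` K" using m by (intro image_eqI[of _ _ m]) auto
next
  fix p assume "p \<in> (\<lambda>k. xs!Suc k) ` K"
  then obtain k where k: "k \<in> K" "p = xs!Suc k" by blast
  have kn: "Suc k < length xs" using Kb k by blast
  have pl: "xs!k < p" using nth_lt[OF srt, of k "Suc k"] kn k by simp
  show "p \<in> r_op (Wk xs K)" unfolding r_char
  proof (intro CollectI conjI notI)
    show "p \<in> Wk xs K" unfolding Wk_def using k pl by (intro UN_I[OF k(1)]) auto
    assume "\<exists>y>p. {p..y} \<subseteq> Wk xs K"
    then obtain y where y: "y > p" "{p..y} \<subseteq> Wk xs K" by blast
    define y' where "y' = (if Suc (Suc k) < length xs then min y (xs!Suc (Suc k)) else y)"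
    have "p < y'"
    proof (cases "Suc (Suc k) < length xs")
      case True
      then have "xs!Suc k < xs!Suc (Suc k)" using nth_lt[OF srt, of "Suc k" "Suc (Suc k)"] by simp
      then show ?thesis using y k True unfolding y'_def by simp
    qed (simp add: y'_def y)
    then obtain z where z: "p < z" "z < y'" using dense by blast
    have "y' \<le> y" unfolding y'_def by simp
    then have "z < y" using z(2) by (rule order.strict_trans2[rotated])
    then have "z \<in> {p..y}" using z by (simp add: less_imp_le)
    then have "z \<in> Wk xs K" using y(2) by blast
    then obtain m where m: "m \<in> K" "xs!m \<le> z" "z \<le> xs!Suc m" unfolding Wk_def by auto
    have mn: "Suc m < length xs" using Kb m by blast
    have "xs!Suc k < xs!Suc m" using m z k by simp
    then have mk: "k < m" using nth_lt[OF srt, of "Suc k" "Suc m"] mn kn by simp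
    show False
    proof (cases "m = Suc k")
      case True then show ?thesis using Kc m k by blast
    next
      case False
      then have mk2: "Suc (Suc k) \<le> m" using mk by simp
      then have ss: "Suc (Suc k) < length xs" using mn by simp
      then have "xs!Suc (Suc k) \<le> xs!m" using nth_le[OF srt, of "Suc (Suc k)" m] mn mk2 by simp
      moreover have "y' \<le> xs!Suc (Suc k)" using ss unfolding y'_def by simp
      ultimately show False using m z by simp
    qed
  qed
qed

lemma W_A: "Wk xs K \<inter> set xs \<subseteq> (\<lambda>k. xs!k) ` K \<union> (\<lambda>k. xs!Suc k) ` K"
proof
  fix a assume a: "a \<in> Wk xs K \<inter> set xs"
  then obtain m where m: "m \<in> K" "xs!m \<le> a" "a \<le> xs!Suc m" unfolding Wk_def by auto
  obtain i where i: "i < length xs" "a = xs!i" using a by (auto simp: in_set_conv_nth)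
  have mn: "Suc m < length xs" using Kb m by blast
  have "m \<le> i" "i \<le> Suc m" using nth_le[OF srt, of m i] nth_le[OF srt, of i "Suc m"] m i mn by auto
  then have "i = m \<or> i = Suc m" by auto
  then show "a \<in> (\<lambda>k. xs!k) ` K \<union> (\<lambda>k. xs!Suc k) ` K" using i m by auto
qed

lemma W_bound: "y \<in> Wk xs K \<Longrightarrow> \<exists>a\<in>set xs. y \<le> a"
  unfolding Wk_def using Kb by auto

end

lemma max_op_Un: "\<forall>y\<in>X. \<exists>a\<in>A. y \<le> a \<Longrightarrow> max_op (X \<union> (A::'a::linorder set)) = max_op A"
proof (intro set_eqI iffI)
  fix x assume "\<forall>y\<in>X. \<exists>a\<in>A. y \<le> a" and x: "x \<in> max_op (X \<union> A)"
  then have x1: "x \<in> X \<union> A" "\<forall>y\<in>X \<union> A. y \<le> x" unfolding max_op_def by auto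
  have "x \<in> A"
  proof (cases "x \<in> X")
    case True
    then obtain a where a: "a \<in> A" "x \<le> a" using \<open>\<forall>y\<in>X. \<exists>a\<in>A. y \<le> a\<close> by blast
    then have "a \<le> x" using x1 by blast
    then show ?thesis using a antisym by metis
  qed (use x1 in blast)
  then show "x \<in> max_op A" using x1 unfolding max_op_def by blast
next
  fix x assume h: "\<forall>y\<in>X. \<exists>a\<in>A. y \<le> a" and x: "x \<in> max_op A"
  then have x1: "x \<in> A" "\<forall>y\<in>A. y \<le> x" unfolding max_op_def by auto
  have "\<forall>y\<in>X. y \<le> x" using h x1 order_trans by metis
  then show "x \<in> max_op (X \<union> A)" using x1 unfolding max_op_def by blast
qed



lemma cnd_W:
  assumes w: "wsetup xs K" and K': "K' = {k\<in>K. xs!Suc k \<in> B}"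
  shows "cnd (set xs) B (Wk xs K) (Wk xs K')"
proof -
  have w': "wsetup xs K'" using w K' unfolding wsetup_def by auto
  have srt: "sorted_wrt (<) xs" and Kb: "\<And>k. k \<in> K \<Longrightarrow> Suc k < length xs"
    and Kc: "\<And>k. k \<in> K \<Longrightarrow> Suc k \<notin> K" using w unfolding wsetup_def by auto
  note l = wsetup.W_l[OF w] wsetup.W_l[OF w']
  note r = wsetup.W_r[OF w] wsetup.W_r[OF w']
  have c1: "(\<lambda>k. xs!k) ` K \<union> (\<lambda>k. xs!Suc k) ` K \<subseteq> set xs"
  proof
    fix a assume "a \<in> (\<lambda>k. xs!k) ` K \<union> (\<lambda>k. xs!Suc k) ` K"
    then obtain k where "k \<in> K" "a = xs!k \<or> a = xs!Suc k" by blast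
    moreover have "Suc k < length xs" using Kb calculation(1) .
    ultimately show "a \<in> set xs" by (metis Suc_lessD nth_mem)
  qed
  have c3: "(\<lambda>k. xs!k) ` K \<inter> (\<lambda>k. xs!Suc k) ` K = {}"
  proof (rule ccontr)
    assume "\<not> ?thesis"
    then obtain k m where km: "k \<in> K" "m \<in> K" "xs!k = xs!Suc m" by blast
    have "Suc k < length xs" "Suc m < length xs" using Kb km by auto
    then have "k = Suc m" using km(3) nth_le[OF srt, of k "Suc m"] nth_le[OF srt, of "Suc m" k] by simp
    then show False using Kc km by blast
  qed
  have c4: "Wk xs K' \<subseteq> Wk xs K" unfolding Wk_def K' by blast
  show ?thesis unfolding cnd_def l r
    using c1 c3 c4 wsetup.W_A[OF w] K' by blast
qed

lemma ips_list:
  fixes xs :: "'a::linorder list"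
  assumes srt: "sorted_wrt (<) xs"
  shows "ips (set xs) B = (\<lambda>k. xs!k) ` {k. Suc k < length xs \<and> xs!Suc k \<in> B}"
proof (intro set_eqI iffI)
  fix i assume "i \<in> ips (set xs) B"
  then obtain j where i: "i \<in> set xs" and j: "j \<in> set xs" "i < j" "\<forall>k\<in>set xs. i < k \<longrightarrow> j \<le> k" "j \<in> B"
    unfolding ips_def by blast
  obtain k where k: "k < length xs" "i = xs!k" using i by (auto simp: in_set_conv_nth)
  obtain m where m: "m < length xs" "j = xs!m" using j by (auto simp: in_set_conv_nth)
  have km: "k < m" using nth_lt[OF srt k(1) m(1)] j k m by simp
  then have sk: "Suc k < length xs" using m by simp
  have "i < xs!Suc k" using nth_lt[OF srt k(1) sk] k by simp
  then have "j \<le> xs!Suc k" using j(3) sk by simp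
  then have "m \<le> Suc k" using nth_le[OF srt m(1) sk] m by simp
  then have "m = Suc k" using km by simp
  then show "i \<in> (\<lambda>k. xs!k) ` {k. Suc k < length xs \<and> xs!Suc k \<in> B}" using k sk m j by auto
next
  fix i assume "i \<in> (\<lambda>k. xs!k) ` {k. Suc k < length xs \<and> xs!Suc k \<in> B}"
  then obtain k where k: "Suc k < length xs" "xs!Suc k \<in> B" "i = xs!k" by blast
  have "\<forall>a\<in>set xs. i < a \<longrightarrow> xs!Suc k \<le> a"
  proof (intro ballI impI)
    fix a assume "a \<in> set xs" "i < a"
    then obtain m where m: "m < length xs" "a = xs!m" by (auto simp: in_set_conv_nth)
    have "k < m" using nth_lt[OF srt _ m(1), of k] k m \<open>i < a\<close> by simp
    then show "xs!Suc k \<le> a" using nth_le[OF srt k(1) m(1)] m by simp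
  qed
  moreover have "i < xs!Suc k" using nth_lt[OF srt _ k(1), of k] k by simp
  moreover have "i \<in> set xs" "xs!Suc k \<in> set xs" using k by auto
  ultimately show "i \<in> ips (set xs) B" unfolding ips_def using k by blast
qed

lemma bwd:
  fixes A :: "'a::dense_linorder set"
  assumes fA: "finite A"
  shows "\<exists>D E D1 E1. D \<in> Pfci \<and> E \<in> Pfci \<and> D1 \<in> Pfci \<and> E1 \<in> Pfci \<and>
    cnd A B D D1 \<and> cnd A B E E1 \<and> A \<subseteq> l_op D \<union> l_op E \<union> max_op A \<and>
    max_op (D \<union> E \<union> A) = max_op A \<and> ips A B = l_op D1 \<union> l_op E1"
proof -
  define xs where "xs = sorted_list_of_set A"
  have sx: "set xs = A" unfolding xs_def using fA by simp
  have srt: "sorted_wrt (<) xs" unfolding xs_def by simp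
  define n where "n = length xs"
  define K0 where "K0 = {k. Suc k < n \<and> even k}"
  define K1 where "K1 = {k. Suc k < n \<and> odd k}"
  define K0' where "K0' = {k\<in>K0. xs!Suc k \<in> B}"
  define K1' where "K1' = {k\<in>K1. xs!Suc k \<in> B}"
  have w0: "wsetup xs K0" unfolding wsetup_def K0_def n_def using srt by auto
  have w1: "wsetup xs K1" unfolding wsetup_def K1_def n_def using srt by auto
  have w0': "wsetup xs K0'" unfolding wsetup_def K0'_def K0_def n_def using srt by auto
  have w1': "wsetup xs K1'" unfolding wsetup_def K1'_def K1_def n_def using srt by auto
  have fin: "finite K0" "finite K1" "finite K0'" "finite K1'"
    unfolding K0'_def K1'_def K0_def K1_def by (auto intro: finite_subset[of _ "{..<n}"])
  let ?D = "Wk xs K0" and ?E = "Wk xs K1" and ?D1 = "Wk xs K0'" and ?E1 = "Wk xs K1'"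
  have P: "?D \<in> Pfci" "?E \<in> Pfci" "?D1 \<in> Pfci" "?E1 \<in> Pfci" using W_pfci fin by auto
  have cD: "cnd A B ?D ?D1" using cnd_W[OF w0 K0'_def] sx by simp
  have cE: "cnd A B ?E ?E1" using cnd_W[OF w1 K1'_def] sx by simp
  have g1: "A \<subseteq> l_op ?D \<union> l_op ?E \<union> max_op A"
  proof
    fix a assume "a \<in> A"
    then obtain k where k: "k < n" "a = xs!k" using sx by (auto simp: in_set_conv_nth n_def)
    show "a \<in> l_op ?D \<union> l_op ?E \<union> max_op A"
    proof (cases "Suc k < n")
      case True
      then have "k \<in> K0 \<or> k \<in> K1" unfolding K0_def K1_def by auto
      then show ?thesis unfolding wsetup.W_l[OF w0] wsetup.W_l[OF w1] using k by auto
    next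
      case False
      have "\<forall>y\<in>A. y \<le> a"
      proof
        fix y assume "y \<in> A"
        then obtain m where m: "m < n" "y = xs!m" using sx by (auto simp: in_set_conv_nth n_def)
        then show "y \<le> a" using nth_le[OF srt, of m k] k False by (simp add: n_def)
      qed
      then show ?thesis using \<open>a \<in> A\<close> unfolding max_op_def by blast
    qed
  qed
  have g2: "max_op (?D \<union> ?E \<union> A) = max_op A"
    using max_op_Un[of "?D \<union> ?E" A] wsetup.W_bound[OF w0] wsetup.W_bound[OF w1] sx by blast
  have "{k. Suc k < length xs \<and> xs!Suc k \<in> B} = K0' \<union> K1'"
    unfolding K0'_def K1'_def K0_def K1_def n_def by auto
  then have g3: "ips A B = l_op ?D1 \<union> l_op ?E1"
    unfolding wsetup.W_l[OF w0'] wsetup.W_l[OF w1'] using ips_list[OF srt, of B] sx by auto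
  show ?thesis using P cD cE g1 g2 g3 by blast
qed



definition sub :: "tm \<Rightarrow> tm \<Rightarrow> fm" where "sub s t = TEq (TUn s t) t"

definition blk :: "tm \<Rightarrow> tm \<Rightarrow> fm" where
  "blk S S1 = Conj (sub (TUn (Lt S) (Rt S)) (Var 0))
    (Conj (sub (TInter S (Var 0)) (TUn (Lt S) (Rt S)))
    (Conj (TEq (TInter (Lt S) (Rt S)) Bot)
    (Conj (sub S1 S) (Conj (sub (Lt S1) (Lt S)) (TEq (Rt S1) (TInter (Rt S) (Var 1)))))))"

definition body :: fm where
  "body = Conj (blk (Var 3) (Var 5)) (Conj (blk (Var 4) (Var 6))
     (Conj (sub (Var 0) (TUn (TUn (Lt (Var 3)) (Lt (Var 4))) (Mx (Var 0))))
     (Conj (TEq (Mx (TUn (TUn (Var 3) (Var 4)) (Var 0))) (Mx (Var 0)))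
       (TEq (Var 2) (TUn (Lt (Var 5)) (Lt (Var 6)))))))"

definition phi :: fm where "phi = TEx 3 (TEx 4 (TEx 5 (TEx 6 body)))"

lemma sat_sub: "sat v (sub s t) \<longleftrightarrow> eval_tm v s \<subseteq> eval_tm v t"
  unfolding sub_def by auto

lemma sat_blk: "sat v (blk (Var i) (Var j)) \<longleftrightarrow> cnd (v 0) (v 1) (v i) (v j)"
  unfolding blk_def cnd_def by (simp add: sat_sub)

lemma sat_phi: "sat v phi \<longleftrightarrow> (\<exists>D\<in>Pfci. \<exists>E\<in>Pfci. \<exists>D1\<in>Pfci. \<exists>E1\<in>Pfci.
    cnd (v 0) (v 1) D D1 \<and> cnd (v 0) (v 1) E E1 \<and> v 0 \<subseteq> l_op D \<union> l_op E \<union> max_op (v 0) \<and>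
    max_op (D \<union> E \<union> v 0) = max_op (v 0) \<and> v 2 = l_op D1 \<union> l_op E1)"
  unfolding phi_def body_def by (simp add: sat_blk sat_sub)

lemma phi_ex: "existential phi"
  unfolding phi_def body_def blk_def sub_def by simp

lemma phi_fv: "fv phi \<subseteq> {0, 1, 2}"
  unfolding phi_def body_def blk_def sub_def by auto

theorem corollary5p5:
  shows "\<exists>\<phi>. existential \<phi> \<and> fv \<phi> \<subseteq> {0, 1, 2} \<and>
    (\<forall>(A::'a::{dense_linorder,no_top,order_bot} set) B C v.
        finite A \<and> finite B \<and> finite C \<and> (\<forall>n. v n \<in> Pfci) \<and>
        v 0 = A \<and> v 1 = B \<and> v 2 = C \<longrightarrow> (sat v \<phi> \<longleftrightarrow> ips A B = C))"
proof (intro exI[of _ phi] conjI phi_ex phi_fv allI impI)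
  fix A :: "'a::{dense_linorder,no_top,order_bot} set" and B C and v :: "nat \<Rightarrow> 'a set"
  assume h: "finite A \<and> finite B \<and> finite C \<and> (\<forall>n. v n \<in> Pfci) \<and> v 0 = A \<and> v 1 = B \<and> v 2 = C"
  show "sat v phi \<longleftrightarrow> ips A B = C"
  proof
    assume "sat v phi"
    then obtain D E D1 E1 where "D \<in> Pfci" "E \<in> Pfci" "D1 \<in> Pfci" "E1 \<in> Pfci"
      "cnd A B D D1" "cnd A B E E1" "A \<subseteq> l_op D \<union> l_op E \<union> max_op A"
      "max_op (D \<union> E \<union> A) = max_op A" "C = l_op D1 \<union> l_op E1"
      unfolding sat_phi using h by auto
    then show "ips A B = C" using fwd h by blast
  next
    assume "ips A B = C"
    then show "sat v phi" unfolding sat_phi using bwd[of A B] h by auto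
  qed
qed


end
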